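(* There is a constant $C_5>0$ depending only on $f,h,\tau$ such that for every $\Phi\in\mathcal C$ and every $n\in\mathbb N$, \[ |L^n(\Phi)|_\beta\le|\Phi|_\beta\,\eta^{\beta n}+C_5|\Phi|_\infty . \]
   Context: Let $I=[0,1)$ carry a metric $d_I$, fix $\theta\in(0,1)$, and let $\Omega=I^{\mathbb Z}$ with metric $d(x,y)=\sup_{k\in\mathbb Z}\theta^{|k|}d_I(x_k,y_k)$. Let $\tau:I\to I$ have full branches, so that $b=\#\tau^{-1}(t)$ is constant; let $p_\tau$ be a fixed point of $\tau$. Assume there is $\eta\in(0,1)$ such that every inverse branch $\zeta$ of $\tau$ satisfies $d_I(\zeta(s),\zeta(t))\le\eta\,d_I(s,t)$. Let $(\bar\tau x)_i=\tau(x_i)$. Let $\pi_k:\Omega\to\Omega$ keep the coordinates $|i|\le k$ and set the others to $p_\tau$; $\Phi_k=\Phi\circ\pi_k$. Fix $\beta\in(0,1]$; $|\Phi|_\infty=\sup|\Phi|$, $|\Phi|_\beta=\sup_{k\in\mathbb N}\sup_{x\neq y}|\Phi_k(x)-\Phi_k(y)|/d(x,y)^\beta$, $\|\Phi\|=|\Phi|_\infty+|\Phi|_\beta$, $\mathcal C=\{\Phi\in C(\Omega):\|\Phi\|<\infty\}$. An inverse branch of order $k$ is a choice $\zeta=(\zeta_j)_{|j|\le k}$ of inverse branches of $\tau$, with $(\zeta_x)_j=\zeta_j(x_j)$ for $|j|\le k$, $(\zeta_x)_j=x_j$ otherwise; $b_k=b^{2k+1}$. For real $f\in\mathcal C$,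 $P_k\Phi(x)=b_k^{-1}\sum_{|\zeta|=k}e^{f(\pi_k\zeta_x)}\Phi(\pi_k\zeta_x)$ and $P\Phi=\lim_kP_k\Phi$ pointwise. Fix a Borel probability measure $\nu_0$ with $P^*\nu_0=\lambda\nu_0$, $\lambda=\int P\mathbf 1\,d\nu_0$, and let $h\in\mathcal C$ be the unique strictly positive function with $Ph=\lambda h$, $\nu_0(h)=1$, $h(x)\le \exp\!\big(|f|_\beta\frac{\eta^\beta}{1-\eta^\beta}d(x,y)^\beta\big)h(y)$ for all $x,y$. Define $L\Phi=P(h\Phi)/(\lambda h)$ (so $L\mathbf 1=\mathbf 1$). *)

theory Defs
  imports "HOL-Probability.Probability"
begin

definition Iv :: "real set" where
  "Iv = {0..<1}"

definition Om :: "(int \<Rightarrow> real) set" where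
  "Om = {x. \<forall>i. x i \<in> Iv}"

definition metric_on_I :: "(real \<Rightarrow> real \<Rightarrow> real) \<Rightarrow> bool" where
  "metric_on_I dI \<longleftrightarrow>
     (\<forall>s\<in>Iv. \<forall>t\<in>Iv. 0 \<le> dI s t \<and> (dI s t = 0 \<longleftrightarrow> s = t) \<and> dI s t = dI t s) \<and>
     (\<forall>s\<in>Iv. \<forall>t\<in>Iv. \<forall>u\<in>Iv. dI s u \<le> dI s t + dI t u)"

definition dOm :: "(real \<Rightarrow> real \<Rightarrow> real) \<Rightarrow> real \<Rightarrow> (int \<Rightarrow> real) \<Rightarrow> (int \<Rightarrow> real) \<Rightarrow> real" where
  "dOm dI \<theta> x y = (SUP k::int. \<theta> ^ nat \<bar>k\<bar> * dI (x k) (y k))"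

definition pik :: "real \<Rightarrow> nat \<Rightarrow> (int \<Rightarrow> real) \<Rightarrow> (int \<Rightarrow> real)" where
  "pik p k x = (\<lambda>i. if \<bar>i\<bar> \<le> int k then x i else p)"

definition contOm :: "(real \<Rightarrow> real \<Rightarrow> real) \<Rightarrow> real \<Rightarrow> ((int \<Rightarrow> real) \<Rightarrow> 'b::real_normed_vector) \<Rightarrow> bool" where
  "contOm dI \<theta> \<Phi> \<longleftrightarrow>
     (\<forall>x\<in>Om. \<forall>e>0. \<exists>\<delta>>0. \<forall>y\<in>Om. dOm dI \<theta> x y < \<delta> \<longrightarrow> norm (\<Phi> y - \<Phi> x) < e)"

text \<open>|Phi|_infty (extended-real valued, so that infinity is possible).\<close>
definition supn :: "((int \<Rightarrow> real) \<Rightarrow> 'b::real_normed_vector) \<Rightarrow> ereal" where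
  "supn \<Phi> = (SUP x\<in>Om. ereal (norm (\<Phi> x)))"

definition holder :: "(real \<Rightarrow> real \<Rightarrow> real) \<Rightarrow> real \<Rightarrow> real \<Rightarrow> real \<Rightarrow>
    ((int \<Rightarrow> real) \<Rightarrow> 'b::real_normed_vector) \<Rightarrow> ereal" where
  "holder dI \<theta> p \<beta> \<Phi> =
     (SUP k::nat. SUP xy\<in>{(x, y). x \<in> Om \<and> y \<in> Om \<and> x \<noteq> y}.
        ereal (norm (\<Phi> (pik p k (fst xy)) - \<Phi> (pik p k (snd xy)))
               / dOm dI \<theta> (fst xy) (snd xy) powr \<beta>))"

definition inC :: "(real \<Rightarrow> real \<Rightarrow> real) \<Rightarrow> real \<Rightarrow> real \<Rightarrow> real \<Rightarrow>
    ((int \<Rightarrow> real) \<Rightarrow> 'b::real_normed_vector) \<Rightarrow> bool" where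
  "inC dI \<theta> p \<beta> \<Phi> \<longleftrightarrow>
     contOm dI \<theta> \<Phi> \<and> supn \<Phi> < \<infinity> \<and> holder dI \<theta> p \<beta> \<Phi> < \<infinity>"

text \<open>tau has full branches; Z is the (finite) set of its inverse branches, b = card Z.\<close>
definition full_branches :: "(real \<Rightarrow> real) \<Rightarrow> (real \<Rightarrow> real) set \<Rightarrow> bool" where
  "full_branches \<tau> Z \<longleftrightarrow>
     finite Z \<and> Z \<noteq> {} \<and> (\<forall>t\<in>Iv. \<tau> t \<in> Iv) \<and>
     (\<forall>\<zeta>\<in>Z. \<forall>t\<in>Iv. \<zeta> t \<in> Iv \<and> \<tau> (\<zeta> t) = t) \<and>
     (\<forall>\<zeta>\<in>Z. is_interval (\<zeta> ` Iv)) \<and>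
     (\<forall>t\<in>Iv. \<forall>\<zeta>\<in>Z. \<forall>\<zeta>'\<in>Z. \<zeta> t = \<zeta>' t \<longrightarrow> \<zeta> = \<zeta>') \<and>
     (\<forall>t\<in>Iv. {s\<in>Iv. \<tau> s = t} = (\<lambda>\<zeta>. \<zeta> t) ` Z)"

definition branches :: "(real \<Rightarrow> real) set \<Rightarrow> nat \<Rightarrow> (int \<Rightarrow> real \<Rightarrow> real) set" where
  "branches Z k = PiE {- int k..int k} (\<lambda>_. Z)"

definition pzx :: "real \<Rightarrow> nat \<Rightarrow> (int \<Rightarrow> real \<Rightarrow> real) \<Rightarrow> (int \<Rightarrow> real) \<Rightarrow> (int \<Rightarrow> real)" where
  "pzx p k \<sigma> x = pik p k (\<lambda>i. if \<bar>i\<bar> \<le> int k then \<sigma> i (x i) else x i)"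

definition Pk :: "(real \<Rightarrow> real) set \<Rightarrow> ((int \<Rightarrow> real) \<Rightarrow> real) \<Rightarrow> real \<Rightarrow> nat \<Rightarrow>
    ((int \<Rightarrow> real) \<Rightarrow> 'b::real_normed_vector) \<Rightarrow> (int \<Rightarrow> real) \<Rightarrow> 'b" where
  "Pk Z f p k \<Phi> x =
     (1 / real (card Z ^ (2 * k + 1))) *\<^sub>R
       (\<Sum>\<sigma>\<in>branches Z k. exp (f (pzx p k \<sigma> x)) *\<^sub>R \<Phi> (pzx p k \<sigma> x))"

definition Pop :: "(real \<Rightarrow> real) set \<Rightarrow> ((int \<Rightarrow> real) \<Rightarrow> real) \<Rightarrow> real \<Rightarrow>
    ((int \<Rightarrow> real) \<Rightarrow> 'b::real_normed_vector) \<Rightarrow> (int \<Rightarrow> real) \<Rightarrow> 'b" where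
  "Pop Z f p \<Phi> x = lim (\<lambda>k. Pk Z f p k \<Phi> x)"

definition Lop :: "(real \<Rightarrow> real) set \<Rightarrow> ((int \<Rightarrow> real) \<Rightarrow> real) \<Rightarrow> real \<Rightarrow> real \<Rightarrow>
    ((int \<Rightarrow> real) \<Rightarrow> real) \<Rightarrow> ((int \<Rightarrow> real) \<Rightarrow> 'b::real_normed_vector) \<Rightarrow> (int \<Rightarrow> real) \<Rightarrow> 'b" where
  "Lop Z f p lam h \<Phi> x = (1 / (lam * h x)) *\<^sub>R Pop Z f p (\<lambda>y. h y *\<^sub>R \<Phi> y) x"

definition openOm :: "(real \<Rightarrow> real \<Rightarrow> real) \<Rightarrow> real \<Rightarrow> (int \<Rightarrow> real) set \<Rightarrow> bool" where
  "openOm dI \<theta> U \<longleftrightarrow> U \<subseteq> Om \<and> (\<forall>x\<in>U. \<exists>e>0. \<forall>y\<in>Om. dOm dI \<theta> x y < e \<longrightarrow> y \<in> U)"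

definition borelOm :: "(real \<Rightarrow> real \<Rightarrow> real) \<Rightarrow> real \<Rightarrow> (int \<Rightarrow> real) set set" where
  "borelOm dI \<theta> = sigma_sets Om {U. openOm dI \<theta> U}"

end

theory Submission
  imports Defs
begin



locale ctx =
  fixes dI :: "real \<Rightarrow> real \<Rightarrow> real" and \<theta> \<eta> \<beta> p B :: real and Z :: "(real \<Rightarrow> real) set"
  assumes dIm: "metric_on_I dI"
    and dIB: "\<forall>s\<in>Iv. \<forall>t\<in>Iv. dI s t \<le> B"
    and B0: "0 \<le> B"
    and th0: "0 < \<theta>" and th1: "\<theta> < 1"
    and pI: "p \<in> Iv"
    and eta0: "0 < \<eta>" and eta1: "\<eta> < 1"
    and contr: "\<forall>\<zeta>\<in>Z. \<forall>s\<in>Iv. \<forall>t\<in>Iv. dI (\<zeta> s) (\<zeta> t) \<le> \<eta> * dI s t"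
    and beta0: "0 < \<beta>" and beta1: "\<beta> \<le> 1"
    and Zfin: "finite Z" and Zne: "Z \<noteq> {}"
    and ZI: "\<forall>\<zeta>\<in>Z. \<forall>t\<in>Iv. \<zeta> t \<in> Iv"
begin

abbreviation "d \<equiv> dOm dI \<theta>"

lemma dI_nn: "s \<in> Iv \<Longrightarrow> t \<in> Iv \<Longrightarrow> 0 \<le> dI s t"
  using dIm unfolding metric_on_I_def by blast
lemma dI_0: "s \<in> Iv \<Longrightarrow> dI s s = 0"
  using dIm unfolding metric_on_I_def by blast
lemma dI_pos: "s \<in> Iv \<Longrightarrow> t \<in> Iv \<Longrightarrow> s \<noteq> t \<Longrightarrow> 0 < dI s t"
  using dIm unfolding metric_on_I_def by (metis order_le_less)
lemma dI_sym: "s \<in> Iv \<Longrightarrow> t \<in> Iv \<Longrightarrow> dI s t = dI t s"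
  using dIm unfolding metric_on_I_def by blast

lemma Om_I: "x \<in> Om \<Longrightarrow> x i \<in> Iv" unfolding Om_def by auto

lemma term_le: assumes "x \<in> Om" "y \<in> Om" shows "\<theta> ^ nat \<bar>k\<bar> * dI (x k) (y k) \<le> B"
proof -
  have "\<theta> ^ nat \<bar>k\<bar> \<le> 1" using th0 th1 by (simp add: power_le_one)
  moreover have "0 \<le> dI (x k) (y k)" "dI (x k) (y k) \<le> B" using assms Om_I dI_nn dIB by auto
  ultimately have "\<theta> ^ nat \<bar>k\<bar> * dI (x k) (y k) \<le> 1 * dI (x k) (y k)" by (intro mult_right_mono) auto
  thus ?thesis using \<open>dI (x k) (y k) \<le> B\<close> by simp
qed

lemma bdd: "x \<in> Om \<Longrightarrow> y \<in> Om \<Longrightarrow> bdd_above (range (\<lambda>k. \<theta> ^ nat \<bar>k\<bar> * dI (x k) (y k)))"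
  using term_le by (auto intro!: bdd_aboveI)

lemma d_ge: "x \<in> Om \<Longrightarrow> y \<in> Om \<Longrightarrow> \<theta> ^ nat \<bar>i\<bar> * dI (x i) (y i) \<le> d x y"
  unfolding dOm_def by (rule cSUP_upper[OF _ bdd]) auto

lemma d_le: "(\<And>i. \<theta> ^ nat \<bar>i\<bar> * dI (x i) (y i) \<le> c) \<Longrightarrow> d x y \<le> c"
  unfolding dOm_def by (rule cSUP_least) auto

lemma d_nn: "x \<in> Om \<Longrightarrow> y \<in> Om \<Longrightarrow> 0 \<le> d x y"
proof -
  assume a: "x \<in> Om" "y \<in> Om"
  have "0 \<le> \<theta> ^ nat \<bar>0::int\<bar> * dI (x 0) (y 0)" using a Om_I dI_nn by simp
  also have "\<dots> \<le> d x y" by (rule d_ge[OF a])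
  finally show ?thesis .
qed

lemma d_B: "x \<in> Om \<Longrightarrow> y \<in> Om \<Longrightarrow> d x y \<le> B"
  by (rule d_le) (rule term_le)

lemma d_sym: "x \<in> Om \<Longrightarrow> y \<in> Om \<Longrightarrow> d x y = d y x"
  unfolding dOm_def using dI_sym Om_I by simp

lemma d_pos: assumes "x \<in> Om" "y \<in> Om" "x \<noteq> y" shows "0 < d x y"
proof -
  obtain i where i: "x i \<noteq> y i" using assms(3) by auto
  have "0 < \<theta> ^ nat \<bar>i\<bar> * dI (x i) (y i)" using i assms Om_I dI_pos th0 by simp
  also have "\<dots> \<le> d x y" by (rule d_ge[OF assms(1,2)])
  finally show ?thesis .
qed

lemma pik_Om: "x \<in> Om \<Longrightarrow> pik p k x \<in> Om"
  using pI unfolding pik_def Om_def by auto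

lemma pik_pik: "k \<le> m \<Longrightarrow> pik p m (pik p k x) = pik p k x"
  unfolding pik_def by auto

lemma branch_Z: "\<sigma> \<in> branches Z m \<Longrightarrow> \<bar>i\<bar> \<le> int m \<Longrightarrow> \<sigma> i \<in> Z"
  unfolding branches_def by (auto simp: PiE_iff abs_le_iff)

lemma pzx_Om: assumes "\<sigma> \<in> branches Z m" "k \<le> m" "x \<in> Om" shows "pzx p k \<sigma> x \<in> Om"
  using assms pI ZI branch_Z[OF assms(1)] unfolding pzx_def pik_def Om_def by auto

lemma pik_pzx: "k \<le> m \<Longrightarrow> pik p m (pzx p k \<sigma> x) = pzx p k \<sigma> x"
  unfolding pzx_def by (rule pik_pik)

lemma d_pik: assumes "x \<in> Om" "y \<in> Om" shows "d (pik p k x) (pik p k y) \<le> d x y"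
proof (rule d_le)
  fix i show "\<theta> ^ nat \<bar>i\<bar> * dI (pik p k x i) (pik p k y i) \<le> d x y"
    using d_ge[OF assms] dI_0[OF pI] d_nn[OF assms] unfolding pik_def by auto
qed

lemma d_pzx: assumes "\<sigma> \<in> branches Z k" "x \<in> Om" "y \<in> Om"
  shows "d (pzx p k \<sigma> x) (pzx p k \<sigma> y) \<le> \<eta> * d x y"
proof (rule d_le)
  fix i
  show "\<theta> ^ nat \<bar>i\<bar> * dI (pzx p k \<sigma> x i) (pzx p k \<sigma> y i) \<le> \<eta> * d x y"
  proof (cases "\<bar>i\<bar> \<le> int k")
    case True
    have "dI (\<sigma> i (x i)) (\<sigma> i (y i)) \<le> \<eta> * dI (x i) (y i)"
      using contr branch_Z[OF assms(1) True] Om_I assms by blast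
    hence "\<theta> ^ nat \<bar>i\<bar> * dI (\<sigma> i (x i)) (\<sigma> i (y i)) \<le> \<eta> * (\<theta> ^ nat \<bar>i\<bar> * dI (x i) (y i))"
      using th0 by (simp add: mult_left_mono mult.left_commute)
    also have "\<dots> \<le> \<eta> * d x y" using d_ge[OF assms(2,3)] eta0 by simp
    finally show ?thesis using True unfolding pzx_def pik_def by simp
  next
    case False
    thus ?thesis using dI_0[OF pI] d_nn[OF assms(2,3)] eta0 unfolding pzx_def pik_def by simp
  qed
qed

lemma d_ext: assumes "\<sigma> \<in> branches Z (Suc k)" "u \<in> Om"
  shows "d (pzx p (Suc k) \<sigma> u) (pzx p k \<sigma> u) \<le> \<theta> ^ Suc k * B"
proof (rule d_le)
  fix i
  show "\<theta> ^ nat \<bar>i\<bar> * dI (pzx p (Suc k) \<sigma> u i) (pzx p k \<sigma> u i) \<le> \<theta> ^ Suc k * B"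
  proof (cases "\<bar>i\<bar> \<le> int k")
    case True
    have "\<sigma> i (u i) \<in> Iv" using ZI branch_Z[OF assms(1)] True Om_I[OF assms(2)] by auto
    thus ?thesis using True dI_0 B0 th0 unfolding pzx_def pik_def by simp
  next
    case False
    have le: "\<theta> ^ nat \<bar>i\<bar> \<le> \<theta> ^ Suc k" using False th0 th1 by (intro power_decreasing) auto
    have "pzx p (Suc k) \<sigma> u \<in> Om" "pzx p k \<sigma> u \<in> Om" using pzx_Om assms by auto
    hence "0 \<le> dI (pzx p (Suc k) \<sigma> u i) (pzx p k \<sigma> u i)" "dI (pzx p (Suc k) \<sigma> u i) (pzx p k \<sigma> u i) \<le> B"
      using Om_I dI_nn dIB by auto
    thus ?thesis using le th0 by (meson mult_mono zero_le_power less_imp_le order_trans B0)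
  qed
qed


lemma Om_ne: "(\<lambda>_. 0) \<in> Om" unfolding Om_def Iv_def by auto
lemma Om_pair: "(\<lambda>_. 0) \<in> Om \<and> (\<lambda>_. 1/2) \<in> Om \<and> (\<lambda>_::int. 0::real) \<noteq> (\<lambda>_. 1/2)"
  unfolding Om_def Iv_def by (auto simp: fun_eq_iff)

lemma supn_nn: "0 \<le> supn \<Phi>"
proof -
  have "ereal (norm (\<Phi> (\<lambda>_. 0))) \<le> supn \<Phi>" unfolding supn_def by (rule SUP_upper[OF Om_ne])
  thus ?thesis by (meson ereal_less_eq(5) norm_ge_zero order_trans)
qed

lemma supn_bound: assumes "supn \<Phi> < \<infinity>" "x \<in> Om" shows "norm (\<Phi> x) \<le> real_of_ereal (supn \<Phi>)"
proof -
  have "ereal (norm (\<Phi> x)) \<le> supn \<Phi>" unfolding supn_def by (rule SUP_upper[OF assms(2)])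
  thus ?thesis using assms(1) supn_nn[of \<Phi>] by (cases "supn \<Phi>") auto
qed

lemma supn_le: assumes "\<And>x. x \<in> Om \<Longrightarrow> norm (\<Phi> x) \<le> M" shows "supn \<Phi> \<le> ereal M"
  unfolding supn_def by (rule SUP_least) (simp add: assms)


lemma holder_nn: "0 \<le> holder dI \<theta> p \<beta> \<Phi>"
proof -
  let ?x = "\<lambda>_::int. 0::real" and ?y = "\<lambda>_::int. 1/2::real"
  have "ereal (norm (\<Phi> (pik p 0 (fst (?x,?y))) - \<Phi> (pik p 0 (snd (?x,?y)))) / d (fst (?x,?y)) (snd (?x,?y)) powr \<beta>)
     \<le> (SUP xy\<in>{(x, y). x \<in> Om \<and> y \<in> Om \<and> x \<noteq> y}.
        ereal (norm (\<Phi> (pik p 0 (fst xy)) - \<Phi> (pik p 0 (snd xy))) / d (fst xy) (snd xy) powr \<beta>))"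
    by (rule SUP_upper) (use Om_pair in auto)
  also have "\<dots> \<le> holder dI \<theta> p \<beta> \<Phi>" unfolding holder_def by (rule SUP_upper) auto
  finally show ?thesis by (meson ereal_less_eq(5) order_trans divide_nonneg_nonneg norm_ge_zero powr_ge_zero)
qed

lemma holder_bound: assumes "holder dI \<theta> p \<beta> \<Phi> < \<infinity>" "a \<in> Om" "b \<in> Om"
  shows "norm (\<Phi> (pik p k a) - \<Phi> (pik p k b)) \<le> real_of_ereal (holder dI \<theta> p \<beta> \<Phi>) * d a b powr \<beta>"
proof (cases "a = b")
  case True thus ?thesis using real_of_ereal_pos[OF holder_nn[of \<Phi>]] by simp
next
  case False
  have dp: "0 < d a b" using d_pos assms False by auto
  have "ereal (norm (\<Phi> (pik p k (fst (a,b))) - \<Phi> (pik p k (snd (a,b)))) / d (fst (a,b)) (snd (a,b)) powr \<beta>)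
     \<le> (SUP xy\<in>{(x, y). x \<in> Om \<and> y \<in> Om \<and> x \<noteq> y}.
        ereal (norm (\<Phi> (pik p k (fst xy)) - \<Phi> (pik p k (snd xy))) / d (fst xy) (snd xy) powr \<beta>))"
    by (rule SUP_upper) (use assms False in auto)
  also have "\<dots> \<le> holder dI \<theta> p \<beta> \<Phi>" unfolding holder_def by (rule SUP_upper) auto
  finally have "norm (\<Phi> (pik p k a) - \<Phi> (pik p k b)) / d a b powr \<beta> \<le> real_of_ereal (holder dI \<theta> p \<beta> \<Phi>)"
    using assms(1) holder_nn[of \<Phi>] by (cases "holder dI \<theta> p \<beta> \<Phi>") auto
  thus ?thesis using dp by (simp add: divide_le_eq mult.commute)
qed

lemma holder_le: assumes "\<And>k a b. a \<in> Om \<Longrightarrow> b \<in> Om \<Longrightarrow> norm (\<Phi> (pik p k a) - \<Phi> (pik p k b)) \<le> H * d a b powr \<beta>"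
  shows "holder dI \<theta> p \<beta> \<Phi> \<le> ereal H"
  unfolding holder_def
proof (intro SUP_least, clarsimp)
  fix k a b assume ab: "a \<in> Om" "b \<in> Om" "a \<noteq> b"
  have dp: "0 < d a b powr \<beta>" using d_pos[OF ab] by simp
  show "norm (\<Phi> (pik p k a) - \<Phi> (pik p k b)) / d a b powr \<beta> \<le> H"
    using assms[OF ab(1,2), of k] dp by (simp add: divide_le_eq)
qed

lemma fin_branches: "finite (branches Z k)"
  unfolding branches_def using Zfin by (intro finite_PiE) auto

lemma card_branches: "card (branches Z k) = card Z ^ (2*k+1)"
proof -
  have "card (branches Z k) = card Z ^ card {- int k..int k}"
    unfolding branches_def by (simp add: card_PiE)
  also have "card {- int k..int k} = 2*k+1" by simp
  finally show ?thesis .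
qed

lemma cardZ_pos: "0 < card Z" using Zfin Zne by (simp add: card_gt_0_iff)

lemma fiber_eq: assumes "y \<in> branches Z k"
  shows "{x \<in> branches Z (Suc k). restrict x {- int k..int k} = y}
       = PiE {- int (Suc k)..int (Suc k)} (\<lambda>i. if i \<in> {- int k..int k} then {y i} else Z)"
proof (rule set_eqI, rule iffI)
  fix x assume "x \<in> {x \<in> branches Z (Suc k). restrict x {- int k..int k} = y}"
  hence x: "x \<in> PiE {- int (Suc k)..int (Suc k)} (\<lambda>_. Z)" "restrict x {- int k..int k} = y"
    unfolding branches_def by auto
  show "x \<in> PiE {- int (Suc k)..int (Suc k)} (\<lambda>i. if i \<in> {- int k..int k} then {y i} else Z)"
  proof (rule PiE_I)
    fix i assume i: "i \<in> {- int (Suc k)..int (Suc k)}"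
    show "x i \<in> (if i \<in> {- int k..int k} then {y i} else Z)"
    proof (cases "i \<in> {- int k..int k}")
      case True
      have "x i = restrict x {- int k..int k} i" using True by simp
      thus ?thesis using x(2) True by simp
    next
      case False thus ?thesis using x(1) i by auto
    qed
  next
    fix i assume "i \<notin> {- int (Suc k)..int (Suc k)}" thus "x i = undefined" using x(1) by auto
  qed
next
  fix x assume x: "x \<in> PiE {- int (Suc k)..int (Suc k)} (\<lambda>i. if i \<in> {- int k..int k} then {y i} else Z)"
  have y: "y \<in> PiE {- int k..int k} (\<lambda>_. Z)" using assms unfolding branches_def .
  have "x \<in> PiE {- int (Suc k)..int (Suc k)} (\<lambda>_. Z)"
  proof (rule PiE_I)
    fix i assume i: "i \<in> {- int (Suc k)..int (Suc k)}"
    show "x i \<in> Z"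
    proof (cases "i \<in> {- int k..int k}")
      case True
      have "x i \<in> {y i}" using PiE_mem[OF x i] True by simp
      moreover have "y i \<in> Z" using PiE_mem[OF y True] .
      ultimately show ?thesis by simp
    next
      case False thus ?thesis using PiE_mem[OF x i] by (simp only: if_False)
    qed
  next
    fix i assume "i \<notin> {- int (Suc k)..int (Suc k)}" thus "x i = undefined" using x by auto
  qed
  moreover have "restrict x {- int k..int k} = y"
  proof
    fix i show "restrict x {- int k..int k} i = y i"
    proof (cases "i \<in> {- int k..int k}")
      case True
      hence "i \<in> {- int (Suc k)..int (Suc k)}" by auto
      have "x i \<in> {y i}" using PiE_mem[OF x \<open>i \<in> {- int (Suc k)..int (Suc k)}\<close>] True by simp
      thus ?thesis using True by simp
    next
      case False thus ?thesis using y by auto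
    qed
  qed
  ultimately show "x \<in> {x \<in> branches Z (Suc k). restrict x {- int k..int k} = y}"
    unfolding branches_def by auto
qed

end



lemma exp_lip: fixes x y c :: real assumes "x \<le> c" "y \<le> c" shows "\<bar>exp x - exp y\<bar> \<le> exp c * \<bar>x - y\<bar>"
proof -
  have key: "exp b - exp a \<le> exp c * (b - a)" if "a \<le> b" "b \<le> c" for a b :: real
  proof -
    have "1 + (a - b) \<le> exp (a - b)" by (rule exp_ge_add_one_self)
    hence "exp b * (1 + (a - b)) \<le> exp b * exp (a - b)" by simp
    hence "exp b - exp a \<le> exp b * (b - a)" by (simp add: exp_diff algebra_simps)
    also have "\<dots> \<le> exp c * (b - a)" using that by (intro mult_right_mono) auto
    finally show ?thesis .
  qed
  show ?thesis
  proof (cases "x \<le> y")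
    case True thus ?thesis using key[of x y] assms by (simp add: abs_if)
  next
    case False thus ?thesis using key[of y x] assms by (simp add: abs_if)
  qed
qed

context ctx begin

lemma card_fiber: assumes "y \<in> branches Z k"
  shows "card {x \<in> branches Z (Suc k). restrict x {- int k..int k} = y} = card Z ^ 2"
proof -
  let ?S = "{- int k..int k}" and ?S' = "{- int (Suc k)..int (Suc k)}"
  have "card {x \<in> branches Z (Suc k). restrict x ?S = y}
      = (\<Prod>i\<in>?S'. card (if i \<in> ?S then {y i} else Z))"
    unfolding fiber_eq[OF assms] by (simp add: card_PiE)
  also have "\<dots> = (\<Prod>i\<in>?S'. if i \<in> ?S then 1 else card Z)" by (intro prod.cong) auto
  also have "\<dots> = (\<Prod>i\<in>?S' \<inter> {i. i \<in> ?S}. 1) * (\<Prod>i\<in>?S' \<inter> - {i. i \<in> ?S}. card Z)"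
    by (rule prod.If_cases) simp
  also have "?S' \<inter> - {i. i \<in> ?S} = {- int (Suc k), int (Suc k)}" by auto
  also have "(\<Prod>i\<in>{- int (Suc k), int (Suc k)}. card Z) = card Z ^ 2" by (simp add: power2_eq_square)
  finally show ?thesis by (simp only: prod.neutral_const mult_1)
qed

lemma pzx_restrict: "pzx p k (restrict \<sigma> {- int k..int k}) u = pzx p k \<sigma> u"
  unfolding pzx_def pik_def by (auto simp: fun_eq_iff)

lemma sum_ext:
  fixes F :: "(int \<Rightarrow> real) \<Rightarrow> 'b::real_normed_vector"
  shows "(\<Sum>\<sigma>\<in>branches Z (Suc k). F (pzx p k \<sigma> u)) = real (card Z ^ 2) *\<^sub>R (\<Sum>\<sigma>\<in>branches Z k. F (pzx p k \<sigma> u))"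
proof -
  let ?S = "{- int k..int k}"
  have img: "(\<lambda>\<sigma>. restrict \<sigma> ?S) ` branches Z (Suc k) \<subseteq> branches Z k"
    unfolding branches_def by (auto simp: restrict_PiE_iff PiE_iff)
  have "(\<Sum>\<sigma>\<in>branches Z (Suc k). F (pzx p k \<sigma> u))
     = (\<Sum>y\<in>branches Z k. \<Sum>\<sigma>\<in>{x \<in> branches Z (Suc k). restrict x ?S = y}. F (pzx p k \<sigma> u))"
    by (rule sum.group[symmetric, OF fin_branches fin_branches img])
  also have "\<dots> = (\<Sum>y\<in>branches Z k. \<Sum>\<sigma>\<in>{x \<in> branches Z (Suc k). restrict x ?S = y}. F (pzx p k y u))"
    by (intro sum.cong refl) (metis (mono_tags, lifting) mem_Collect_eq pzx_restrict)
  also have "\<dots> = (\<Sum>y\<in>branches Z k. real (card Z ^ 2) *\<^sub>R F (pzx p k y u))"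
  proof (intro sum.cong refl)
    fix y assume y: "y \<in> branches Z k"
    show "(\<Sum>\<sigma>\<in>{x \<in> branches Z (Suc k). restrict x ?S = y}. F (pzx p k y u)) = real (card Z ^ 2) *\<^sub>R F (pzx p k y u)"
      unfolding sum_constant_scaleR card_fiber[OF y] by simp
  qed
  also have "\<dots> = real (card Z ^ 2) *\<^sub>R (\<Sum>\<sigma>\<in>branches Z k. F (pzx p k \<sigma> u))"
    by (simp add: scaleR_sum_right)
  finally show ?thesis .
qed

lemma pow_powr: "(\<theta> ^ n) powr \<beta> = (\<theta> powr \<beta>) ^ n"
  using th0 by (simp add: powr_power powr_realpow[symmetric] powr_powr mult.commute)

end

locale ctx2 = ctx +
  fixes f :: "(int \<Rightarrow> real) \<Rightarrow> real" and Fm Hf :: real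
  assumes fB: "\<forall>x\<in>Om. \<bar>f x\<bar> \<le> Fm"
    and fH: "\<forall>k a b. a \<in> Om \<longrightarrow> b \<in> Om \<longrightarrow> \<bar>f (pik p k a) - f (pik p k b)\<bar> \<le> Hf * d a b powr \<beta>"
    and Hf0: "0 \<le> Hf"
begin

lemma F_diff:
  fixes \<psi> :: "(int \<Rightarrow> real) \<Rightarrow> 'b::real_normed_vector"
  assumes M: "\<forall>x\<in>Om. norm (\<psi> x) \<le> M"
    and H: "\<forall>k a b. a \<in> Om \<longrightarrow> b \<in> Om \<longrightarrow> norm (\<psi> (pik p k a) - \<psi> (pik p k b)) \<le> H * d a b powr \<beta>"
    and ab: "a \<in> Om" "b \<in> Om"
  shows "norm (exp (f (pik p k a)) *\<^sub>R \<psi> (pik p k a) - exp (f (pik p k b)) *\<^sub>R \<psi> (pik p k b))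
     \<le> exp Fm * (H + Hf * M) * d a b powr \<beta>"
proof -
  let ?a = "pik p k a" and ?b = "pik p k b"
  have Om: "?a \<in> Om" "?b \<in> Om" using pik_Om ab by auto
  have fa: "f ?a \<le> Fm" "f ?b \<le> Fm" using fB Om by (auto simp: abs_le_iff)
  have "exp (f ?a) *\<^sub>R \<psi> ?a - exp (f ?b) *\<^sub>R \<psi> ?b
      = exp (f ?a) *\<^sub>R (\<psi> ?a - \<psi> ?b) + (exp (f ?a) - exp (f ?b)) *\<^sub>R \<psi> ?b"
    by (simp add: algebra_simps)
  hence "norm (exp (f ?a) *\<^sub>R \<psi> ?a - exp (f ?b) *\<^sub>R \<psi> ?b)
      \<le> exp (f ?a) * norm (\<psi> ?a - \<psi> ?b) + \<bar>exp (f ?a) - exp (f ?b)\<bar> * norm (\<psi> ?b)"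
    by (metis (no_types, lifting) norm_scaleR norm_triangle_ineq abs_exp_cancel)
  also have "\<dots> \<le> exp Fm * (H * d a b powr \<beta>) + (exp Fm * (Hf * d a b powr \<beta>)) * M"
  proof (intro add_mono mult_mono)
    show "exp (f ?a) \<le> exp Fm" using fa by simp
    show "norm (\<psi> ?a - \<psi> ?b) \<le> H * d a b powr \<beta>" using H ab by blast
    have "\<bar>exp (f ?a) - exp (f ?b)\<bar> \<le> exp Fm * \<bar>f ?a - f ?b\<bar>" by (rule exp_lip[OF fa])
    also have "\<dots> \<le> exp Fm * (Hf * d a b powr \<beta>)" using fH ab by (intro mult_left_mono) auto
    finally show "\<bar>exp (f ?a) - exp (f ?b)\<bar> \<le> exp Fm * (Hf * d a b powr \<beta>)" .
    show "norm (\<psi> ?b) \<le> M" using M Om by auto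
    show "0 \<le> exp Fm * (Hf * d a b powr \<beta>)" using Hf0 by simp
  qed (auto)
  also have "\<dots> = exp Fm * (H + Hf * M) * d a b powr \<beta>" by (simp add: algebra_simps)
  finally show ?thesis .
qed

lemma Pk_diff:
  fixes \<psi> :: "(int \<Rightarrow> real) \<Rightarrow> 'b::real_normed_vector"
  assumes M: "\<forall>x\<in>Om. norm (\<psi> x) \<le> M"
    and H: "\<forall>k a b. a \<in> Om \<longrightarrow> b \<in> Om \<longrightarrow> norm (\<psi> (pik p k a) - \<psi> (pik p k b)) \<le> H * d a b powr \<beta>"
    and u: "u \<in> Om" and H0: "0 \<le> H" and M0: "0 \<le> M"
  shows "norm (Pk Z f p (Suc k) \<psi> u - Pk Z f p k \<psi> u) \<le> exp Fm * (H + Hf * M) * B powr \<beta> * (\<theta> powr \<beta>) ^ Suc k"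
proof -
  let ?F = "\<lambda>x. exp (f x) *\<^sub>R \<psi> x"
  let ?b = "card Z" and ?B' = "branches Z (Suc k)"
  let ?c = "exp Fm * (H + Hf * M)"
  have bpos: "0 < real ?b" using cardZ_pos by simp
  have e1: "Pk Z f p (Suc k) \<psi> u = (1 / real (?b ^ (2*Suc k+1))) *\<^sub>R (\<Sum>\<sigma>\<in>?B'. ?F (pzx p (Suc k) \<sigma> u))"
    unfolding Pk_def ..
  have "Pk Z f p k \<psi> u = (1 / real (?b ^ (2*k+1))) *\<^sub>R (\<Sum>\<sigma>\<in>branches Z k. ?F (pzx p k \<sigma> u))"
    unfolding Pk_def ..
  also have "\<dots> = (1 / real (?b ^ (2*Suc k+1))) *\<^sub>R (\<Sum>\<sigma>\<in>?B'. ?F (pzx p k \<sigma> u))"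
    using bpos by (simp add: sum_ext[of ?F k u] power_add power2_eq_square field_simps)
  finally have e2: "Pk Z f p k \<psi> u = (1 / real (?b ^ (2*Suc k+1))) *\<^sub>R (\<Sum>\<sigma>\<in>?B'. ?F (pzx p k \<sigma> u))" .
  have "Pk Z f p (Suc k) \<psi> u - Pk Z f p k \<psi> u
     = (1 / real (?b ^ (2*Suc k+1))) *\<^sub>R (\<Sum>\<sigma>\<in>?B'. ?F (pzx p (Suc k) \<sigma> u) - ?F (pzx p k \<sigma> u))"
    unfolding e1 e2 by (simp add: sum_subtractf scaleR_diff_right)
  hence "norm (Pk Z f p (Suc k) \<psi> u - Pk Z f p k \<psi> u)
     = (1 / real (?b ^ (2*Suc k+1))) * norm (\<Sum>\<sigma>\<in>?B'. ?F (pzx p (Suc k) \<sigma> u) - ?F (pzx p k \<sigma> u))"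
    by simp
  also have "\<dots> \<le> (1 / real (?b ^ (2*Suc k+1))) * (\<Sum>\<sigma>\<in>?B'. ?c * B powr \<beta> * (\<theta> powr \<beta>) ^ Suc k)"
  proof (intro mult_left_mono order.trans[OF norm_sum] sum_mono)
    fix \<sigma> assume s: "\<sigma> \<in> ?B'"
    let ?a1 = "pzx p (Suc k) \<sigma> u" and ?a2 = "pzx p k \<sigma> u"
    have Om: "?a1 \<in> Om" "?a2 \<in> Om" using pzx_Om[OF s _ u] by auto
    have "norm (?F ?a1 - ?F ?a2) = norm (?F (pik p (Suc k) ?a1) - ?F (pik p (Suc k) ?a2))"
      by (simp add: pik_pzx)
    also have "\<dots> \<le> ?c * d ?a1 ?a2 powr \<beta>" by (rule F_diff[OF M H Om])
    also have "\<dots> \<le> ?c * (\<theta> ^ Suc k * B) powr \<beta>"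
      using d_ext[OF s u] d_nn[OF Om] beta0 Hf0 H0 M0
      by (intro mult_left_mono powr_mono2) auto
    also have "\<dots> = ?c * B powr \<beta> * (\<theta> powr \<beta>) ^ Suc k"
      using B0 th0 by (simp add: powr_mult pow_powr)
    finally show "norm (?F ?a1 - ?F ?a2) \<le> ?c * B powr \<beta> * (\<theta> powr \<beta>) ^ Suc k" .
  qed simp
  also have "\<dots> = ?c * B powr \<beta> * (\<theta> powr \<beta>) ^ Suc k"
    using bpos by (simp add: card_branches)
  finally show ?thesis .
qed

lemma Pk_conv:
  fixes \<psi> :: "(int \<Rightarrow> real) \<Rightarrow> 'b::banach"
  assumes M: "\<forall>x\<in>Om. norm (\<psi> x) \<le> M"
    and H: "\<forall>k a b. a \<in> Om \<longrightarrow> b \<in> Om \<longrightarrow> norm (\<psi> (pik p k a) - \<psi> (pik p k b)) \<le> H * d a b powr \<beta>"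
    and u: "u \<in> Om" and H0: "0 \<le> H" and M0: "0 \<le> M"
  shows "convergent (\<lambda>k. Pk Z f p k \<psi> u)"
proof -
  let ?T = "\<lambda>k. Pk Z f p k \<psi> u"
  let ?c = "exp Fm * (H + Hf * M) * B powr \<beta>"
  have q: "0 \<le> \<theta> powr \<beta>" "\<theta> powr \<beta> < 1" using th0 th1 beta0 powr_less_mono2[of \<beta> \<theta> 1] by auto
  have sg: "summable (\<lambda>k. ?c * (\<theta> powr \<beta>) ^ Suc k)"
    using q by (intro summable_mult summable_Suc_iff[THEN iffD2] summable_geometric) auto
  have "summable (\<lambda>k. norm (?T (Suc k) - ?T k))"
    by (rule summable_comparison_test[OF _ sg]) (use Pk_diff[OF M H u H0 M0] in auto)
  hence s: "summable (\<lambda>k. ?T (Suc k) - ?T k)" by (rule summable_norm_cancel)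
  have "(\<lambda>n. \<Sum>k<n. ?T (Suc k) - ?T k) \<longlonglongrightarrow> suminf (\<lambda>k. ?T (Suc k) - ?T k)"
    by (rule summable_LIMSEQ[OF s])
  moreover have eq: "\<And>n. (\<Sum>k<n. ?T (Suc k) - ?T k) = ?T n - ?T 0" by (rule sum_lessThan_telescope)
  ultimately have "(\<lambda>n. ?T n - ?T 0) \<longlonglongrightarrow> suminf (\<lambda>k. ?T (Suc k) - ?T k)"
    by (simp only: eq)
  hence "(\<lambda>n. (?T n - ?T 0) + ?T 0) \<longlonglongrightarrow> suminf (\<lambda>k. ?T (Suc k) - ?T k) + ?T 0"
    by (intro tendsto_add tendsto_const)
  thus ?thesis unfolding convergent_def by auto
qed

end



lemma wavg:
  fixes y1 y2 :: "'i \<Rightarrow> 'b::real_normed_vector" and c1 c2 :: "'i \<Rightarrow> real"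
  assumes A: "finite A" "A \<noteq> {}"
    and pos: "\<And>i. i \<in> A \<Longrightarrow> 0 < c1 i" "\<And>i. i \<in> A \<Longrightarrow> 0 < c2 i"
    and r: "\<And>i. i \<in> A \<Longrightarrow> c1 i \<le> exp Q * c2 i" "\<And>i. i \<in> A \<Longrightarrow> c2 i \<le> exp Q * c1 i"
    and yM: "\<And>i. i \<in> A \<Longrightarrow> norm (y2 i) \<le> M"
    and yD: "\<And>i. i \<in> A \<Longrightarrow> norm (y1 i - y2 i) \<le> D" and Q0: "0 \<le> Q"
  shows "norm ((1 / sum c1 A) *\<^sub>R (\<Sum>i\<in>A. c1 i *\<^sub>R y1 i) - (1 / sum c2 A) *\<^sub>R (\<Sum>i\<in>A. c2 i *\<^sub>R y2 i))
      \<le> D + 2 * M * (exp (2*Q) - 1)"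
proof -
  define S1 where "S1 = sum c1 A"
  define S2 where "S2 = sum c2 A"
  have S1: "0 < S1" unfolding S1_def using A pos by (intro sum_pos) auto
  have S2: "0 < S2" unfolding S2_def using A pos by (intro sum_pos) auto
  define w1 where "w1 i = c1 i / S1" for i
  define w2 where "w2 i = c2 i / S2" for i
  have w1p: "\<And>i. i \<in> A \<Longrightarrow> 0 \<le> w1 i" and w2p: "\<And>i. i \<in> A \<Longrightarrow> 0 \<le> w2 i"
    unfolding w1_def w2_def using pos S1 S2 by (auto intro: less_imp_le)
  have sw1: "sum w1 A = 1" unfolding w1_def using S1 by (simp add: sum_divide_distrib[symmetric] S1_def)
  have sw2: "sum w2 A = 1" unfolding w2_def using S2 by (simp add: sum_divide_distrib[symmetric] S2_def)
  have S21: "S2 \<le> exp Q * S1" unfolding S1_def S2_def sum_distrib_left by (rule sum_mono) (rule r(2))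
  have S12: "S1 \<le> exp Q * S2" unfolding S1_def S2_def sum_distrib_left by (rule sum_mono) (rule r(1))
  have e2: "exp (2*Q) = exp Q * exp Q" by (simp only: mult_2 exp_add)
  have w12: "w1 i \<le> exp (2*Q) * w2 i" if i: "i \<in> A" for i
  proof -
    have "c1 i * S2 \<le> (exp Q * c2 i) * (exp Q * S1)"
      using r(1)[OF i] S21 pos[OF i] S2 by (intro mult_mono) auto
    also have "\<dots> = exp (2*Q) * c2 i * S1" unfolding e2 by (simp only: mult_ac)
    finally have le: "c1 i * S2 \<le> exp (2*Q) * c2 i * S1" .
    have "w1 i = (c1 i * S2) / (S1 * S2)" unfolding w1_def using S1 S2 by simp
    also have "\<dots> \<le> (exp (2*Q) * c2 i * S1) / (S1 * S2)"
      using le S1 S2 by (intro divide_right_mono) auto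
    also have "\<dots> = exp (2*Q) * w2 i" unfolding w2_def using S1 S2 by simp
    finally show ?thesis .
  qed
  have w21: "w2 i \<le> exp (2*Q) * w1 i" if i: "i \<in> A" for i
  proof -
    have "c2 i * S1 \<le> (exp Q * c1 i) * (exp Q * S2)"
      using r(2)[OF i] S12 pos[OF i] S1 by (intro mult_mono) auto
    also have "\<dots> = exp (2*Q) * c1 i * S2" unfolding e2 by (simp only: mult_ac)
    finally have le: "c2 i * S1 \<le> exp (2*Q) * c1 i * S2" .
    have "w2 i = (c2 i * S1) / (S2 * S1)" unfolding w2_def using S1 S2 by simp
    also have "\<dots> \<le> (exp (2*Q) * c1 i * S2) / (S2 * S1)"
      using le S1 S2 by (intro divide_right_mono) auto
    also have "\<dots> = exp (2*Q) * w1 i" unfolding w1_def using S1 S2 by simp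
    finally show ?thesis .
  qed
  have wd: "\<bar>w1 i - w2 i\<bar> \<le> (exp (2*Q) - 1) * (w1 i + w2 i)" if i: "i \<in> A" for i
  proof (cases "w1 i \<le> w2 i")
    case True
    have "\<bar>w1 i - w2 i\<bar> = w2 i - w1 i" using True by simp
    also have "\<dots> \<le> (exp (2*Q) - 1) * w1 i" using w21[OF i] by (simp add: algebra_simps)
    also have "\<dots> \<le> (exp (2*Q) - 1) * (w1 i + w2 i)" using w2p[OF i] Q0
      by (intro mult_left_mono) auto
    finally show ?thesis .
  next
    case False
    have "\<bar>w1 i - w2 i\<bar> = w1 i - w2 i" using False by simp
    also have "\<dots> \<le> (exp (2*Q) - 1) * w2 i" using w12[OF i] by (simp add: algebra_simps)
    also have "\<dots> \<le> (exp (2*Q) - 1) * (w1 i + w2 i)" using w1p[OF i] Q0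
      by (intro mult_left_mono) auto
    finally show ?thesis .
  qed
  have t: "(1 / S1) *\<^sub>R (c1 i *\<^sub>R y1 i) - (1 / S2) *\<^sub>R (c2 i *\<^sub>R y2 i)
      = w1 i *\<^sub>R (y1 i - y2 i) + (w1 i - w2 i) *\<^sub>R y2 i" for i
    unfolding w1_def w2_def by (simp add: scaleR_diff_right scaleR_diff_left divide_inverse mult.commute)
  have eq: "(1 / S1) *\<^sub>R (\<Sum>i\<in>A. c1 i *\<^sub>R y1 i) - (1 / S2) *\<^sub>R (\<Sum>i\<in>A. c2 i *\<^sub>R y2 i)
     = (\<Sum>i\<in>A. w1 i *\<^sub>R (y1 i - y2 i)) + (\<Sum>i\<in>A. (w1 i - w2 i) *\<^sub>R y2 i)"
    by (simp only: scaleR_sum_right sum_subtractf[symmetric] sum.distrib[symmetric] t)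
  have "norm ((1 / S1) *\<^sub>R (\<Sum>i\<in>A. c1 i *\<^sub>R y1 i) - (1 / S2) *\<^sub>R (\<Sum>i\<in>A. c2 i *\<^sub>R y2 i))
     \<le> norm (\<Sum>i\<in>A. w1 i *\<^sub>R (y1 i - y2 i)) + norm (\<Sum>i\<in>A. (w1 i - w2 i) *\<^sub>R y2 i)"
    unfolding eq by (rule norm_triangle_ineq)
  also have "\<dots> \<le> (\<Sum>i\<in>A. w1 i * D) + (\<Sum>i\<in>A. ((exp (2*Q) - 1) * (w1 i + w2 i)) * M)"
  proof (intro add_mono order.trans[OF norm_sum] sum_mono)
    fix i assume i: "i \<in> A"
    show "norm (w1 i *\<^sub>R (y1 i - y2 i)) \<le> w1 i * D"
      using w1p[OF i] yD[OF i] by (simp add: mult_left_mono)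
    have M0: "0 \<le> M" using yM[OF i] norm_ge_zero order_trans by blast
    show "norm ((w1 i - w2 i) *\<^sub>R y2 i) \<le> ((exp (2*Q) - 1) * (w1 i + w2 i)) * M"
      using wd[OF i] yM[OF i] M0 by (simp add: mult_mono)
  qed
  also have "\<dots> = D + 2 * M * (exp (2*Q) - 1)"
  proof -
    have "(\<Sum>i\<in>A. w1 i * D) = sum w1 A * D" by (rule sum_distrib_right[symmetric])
    moreover have "(\<Sum>i\<in>A. ((exp (2*Q) - 1) * (w1 i + w2 i)) * M) = (exp (2*Q) - 1) * (sum w1 A + sum w2 A) * M"
      by (simp only: sum_distrib_right[symmetric] sum_distrib_left[symmetric] sum.distrib)
    ultimately show ?thesis using sw1 sw2 by simp
  qed
  finally show ?thesis unfolding S1_def S2_def .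
qed


lemma exp_m1_le: fixes x :: real assumes "0 \<le> x" shows "exp x - 1 \<le> x * exp x"
proof -
  have "1 + (- x) \<le> exp (- x)" by (rule exp_ge_add_one_self)
  hence "exp x * (1 - x) \<le> exp x * exp (- x)" by simp
  thus ?thesis by (simp add: exp_minus algebra_simps)
qed

locale ctx3 = ctx2 +
  fixes h :: "(int \<Rightarrow> real) \<Rightarrow> real" and lam Mh Hh Kh :: real
  assumes hpos: "\<forall>x\<in>Om. 0 < h x" and hM: "\<forall>x\<in>Om. \<bar>h x\<bar> \<le> Mh"
    and hH: "\<forall>k a b. a \<in> Om \<longrightarrow> b \<in> Om \<longrightarrow> \<bar>h (pik p k a) - h (pik p k b)\<bar> \<le> Hh * d a b powr \<beta>"
    and Hh0: "0 \<le> Hh" and Mh0: "0 \<le> Mh" and Kh0: "0 \<le> Kh"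
    and hR: "\<forall>x\<in>Om. \<forall>y\<in>Om. h x \<le> exp (Kh * d x y powr \<beta>) * h y"
    and hP: "\<forall>x\<in>Om. Pop Z f p h x = lam * h x"
begin

definition "CL = 4 * (Hf + Kh) * \<eta> powr \<beta> * exp (2 * ((Hf + Kh) * \<eta> powr \<beta> * B powr \<beta>))"

lemma CL0: "0 \<le> CL" unfolding CL_def using Hf0 Kh0 by simp

lemma hlow: obtains c where "0 < c" "\<forall>x\<in>Om. c \<le> h x"
proof -
  let ?x0 = "\<lambda>_::int. 0::real"
  let ?c = "h ?x0 / exp (Kh * B powr \<beta>)"
  have "\<forall>x\<in>Om. ?c \<le> h x"
  proof
    fix x assume x: "x \<in> Om"
    have "h ?x0 \<le> exp (Kh * d ?x0 x powr \<beta>) * h x" using hR Om_ne x by blast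
    also have "\<dots> \<le> exp (Kh * B powr \<beta>) * h x"
    proof (intro mult_right_mono)
      have "Kh * d ?x0 x powr \<beta> \<le> Kh * B powr \<beta>"
        using d_B[OF Om_ne x] d_nn[OF Om_ne x] beta0 Kh0 by (intro mult_left_mono powr_mono2) auto
      thus "exp (Kh * d ?x0 x powr \<beta>) \<le> exp (Kh * B powr \<beta>)" by simp
      show "0 \<le> h x" using hpos x by (simp add: less_imp_le)
    qed
    finally show "?c \<le> h x" by (simp add: divide_le_eq mult.commute)
  qed
  moreover have "0 < ?c" using hpos Om_ne by simp
  ultimately show ?thesis using that by blast
qed

lemma h_norm: "\<forall>x\<in>Om. norm (h x) \<le> Mh" using hM by simp
lemma h_hold: "\<forall>k a b. a \<in> Om \<longrightarrow> b \<in> Om \<longrightarrow> norm (h (pik p k a) - h (pik p k b)) \<le> Hh * d a b powr \<beta>"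
  using hH by simp

lemma bk_pos: "0 < real (card Z ^ (2*k+1))" using cardZ_pos by simp

lemma Pk_h: "Pk Z f p k h u = (1 / real (card Z ^ (2*k+1))) * (\<Sum>\<sigma>\<in>branches Z k. exp (f (pzx p k \<sigma> u)) * h (pzx p k \<sigma> u))"
  unfolding Pk_def by simp

lemma Pk_h_low: assumes c: "0 < c" "\<forall>x\<in>Om. c \<le> h x" and u: "u \<in> Om"
  shows "exp (- Fm) * c \<le> Pk Z f p k h u"
proof -
  have "(\<Sum>\<sigma>\<in>branches Z k. exp (- Fm) * c) \<le> (\<Sum>\<sigma>\<in>branches Z k. exp (f (pzx p k \<sigma> u)) * h (pzx p k \<sigma> u))"
  proof (rule sum_mono)
    fix \<sigma> assume s: "\<sigma> \<in> branches Z k"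
    have a: "pzx p k \<sigma> u \<in> Om" using pzx_Om[OF s _ u] by simp
    have "- Fm \<le> f (pzx p k \<sigma> u)" using fB a by (auto simp: abs_le_iff)
    thus "exp (- Fm) * c \<le> exp (f (pzx p k \<sigma> u)) * h (pzx p k \<sigma> u)"
      using c a by (intro mult_mono) auto
  qed
  hence "real (card Z ^ (2*k+1)) * (exp (- Fm) * c) \<le> (\<Sum>\<sigma>\<in>branches Z k. exp (f (pzx p k \<sigma> u)) * h (pzx p k \<sigma> u))"
    by (simp add: card_branches)
  thus ?thesis unfolding Pk_h using bk_pos[of k] by (simp add: field_simps)
qed

lemma Pk_h_lim: assumes u: "u \<in> Om" shows "(\<lambda>k. Pk Z f p k h u) \<longlonglongrightarrow> lam * h u" "0 < lam * h u"
proof -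
  have "convergent (\<lambda>k. Pk Z f p k h u)" by (rule Pk_conv[OF h_norm h_hold u Hh0 Mh0])
  hence "(\<lambda>k. Pk Z f p k h u) \<longlonglongrightarrow> Pop Z f p h u" unfolding Pop_def by (simp add: convergent_LIMSEQ_iff)
  thus l: "(\<lambda>k. Pk Z f p k h u) \<longlonglongrightarrow> lam * h u" using hP u by simp
  obtain c where c: "0 < c" "\<forall>x\<in>Om. c \<le> h x" by (rule hlow)
  have "exp (- Fm) * c \<le> lam * h u"
    by (rule LIMSEQ_le_const[OF l]) (use Pk_h_low[OF c u] in auto)
  thus "0 < lam * h u" using c by (meson exp_gt_zero mult_pos_pos order_less_le_trans)
qed

lemma c_ratio: assumes a: "a1 \<in> Om" "a2 \<in> Om" "pik p k a1 = a1" "pik p k a2 = a2" and Y: "d a1 a2 \<le> Y"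
  shows "exp (f a1) * h a1 \<le> exp ((Hf + Kh) * Y powr \<beta>) * (exp (f a2) * h a2)"
proof -
  have X: "d a1 a2 powr \<beta> \<le> Y powr \<beta>" using Y d_nn[OF a(1,2)] beta0 by (intro powr_mono2) auto
  have "f a1 - f a2 \<le> Hf * d a1 a2 powr \<beta>" using fH a by (metis abs_le_iff)
  also have "\<dots> \<le> Hf * Y powr \<beta>" using X Hf0 by (intro mult_left_mono)
  finally have fa: "exp (f a1) \<le> exp (Hf * Y powr \<beta>) * exp (f a2)" by (simp add: exp_add[symmetric])
  have "h a1 \<le> exp (Kh * d a1 a2 powr \<beta>) * h a2" using hR a by blast
  also have "\<dots> \<le> exp (Kh * Y powr \<beta>) * h a2" using X Kh0 hpos a by (intro mult_right_mono) (auto intro: mult_left_mono less_imp_le)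
  finally have ha: "h a1 \<le> exp (Kh * Y powr \<beta>) * h a2" .
  have "exp (f a1) * h a1 \<le> (exp (Hf * Y powr \<beta>) * exp (f a2)) * (exp (Kh * Y powr \<beta>) * h a2)"
    using fa ha hpos a by (intro mult_mono) auto
  also have "\<dots> = exp ((Hf + Kh) * Y powr \<beta>) * (exp (f a2) * h a2)"
    by (simp add: distrib_right exp_add)
  finally show ?thesis .
qed

end




context ctx3 begin

lemma R_eq: fixes \<Phi> :: "(int \<Rightarrow> real) \<Rightarrow> 'b::real_normed_vector"
  shows "(1 / Pk Z f p k h u) *\<^sub>R Pk Z f p k (\<lambda>y. h y *\<^sub>R \<Phi> y) u
   = (1 / (\<Sum>\<sigma>\<in>branches Z k. exp (f (pzx p k \<sigma> u)) * h (pzx p k \<sigma> u))) *\<^sub>R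
       (\<Sum>\<sigma>\<in>branches Z k. (exp (f (pzx p k \<sigma> u)) * h (pzx p k \<sigma> u)) *\<^sub>R \<Phi> (pzx p k \<sigma> u))"
proof -
  have "Pk Z f p k (\<lambda>y. h y *\<^sub>R \<Phi> y) u = (1 / real (card Z ^ (2*k+1))) *\<^sub>R
       (\<Sum>\<sigma>\<in>branches Z k. (exp (f (pzx p k \<sigma> u)) * h (pzx p k \<sigma> u)) *\<^sub>R \<Phi> (pzx p k \<sigma> u))"
    unfolding Pk_def by simp
  moreover have gen: "\<And>b S (T::'b). b \<noteq> 0 \<Longrightarrow> (1/((1/b)*S)) *\<^sub>R ((1/b) *\<^sub>R T) = (1/S) *\<^sub>R T"
    by (case_tac "S = 0") (simp_all add: field_simps)
  ultimately show ?thesis unfolding Pk_h using bk_pos[of k] by (simp only: gen)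
qed

lemma L_lim: fixes \<Phi> :: "(int \<Rightarrow> real) \<Rightarrow> 'b::banach"
  assumes M: "\<forall>x\<in>Om. norm (\<Phi> x) \<le> M"
    and H: "\<forall>k a b. a \<in> Om \<longrightarrow> b \<in> Om \<longrightarrow> norm (\<Phi> (pik p k a) - \<Phi> (pik p k b)) \<le> H * d a b powr \<beta>"
    and H0: "0 \<le> H" and M0: "0 \<le> M" and u: "u \<in> Om"
  shows "(\<lambda>k. (1 / Pk Z f p k h u) *\<^sub>R Pk Z f p k (\<lambda>y. h y *\<^sub>R \<Phi> y) u) \<longlonglongrightarrow> Lop Z f p lam h \<Phi> u"
proof -
  let ?\<psi> = "\<lambda>y. h y *\<^sub>R \<Phi> y"
  have M': "\<forall>x\<in>Om. norm (?\<psi> x) \<le> Mh * M"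
    using M hM by (auto intro!: mult_mono)
  have H': "\<forall>k a b. a \<in> Om \<longrightarrow> b \<in> Om \<longrightarrow> norm (?\<psi> (pik p k a) - ?\<psi> (pik p k b)) \<le> (Mh * H + M * Hh) * d a b powr \<beta>"
  proof (intro allI impI)
    fix k a b assume ab: "a \<in> Om" "b \<in> Om"
    let ?a = "pik p k a" and ?b = "pik p k b"
    have Om: "?a \<in> Om" "?b \<in> Om" using pik_Om ab by auto
    have "?\<psi> ?a - ?\<psi> ?b = h ?a *\<^sub>R (\<Phi> ?a - \<Phi> ?b) + (h ?a - h ?b) *\<^sub>R \<Phi> ?b"
      by (simp add: algebra_simps)
    hence "norm (?\<psi> ?a - ?\<psi> ?b) \<le> \<bar>h ?a\<bar> * norm (\<Phi> ?a - \<Phi> ?b) + \<bar>h ?a - h ?b\<bar> * norm (\<Phi> ?b)"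
      by (metis norm_scaleR norm_triangle_ineq real_norm_def)
    also have "\<dots> \<le> Mh * (H * d a b powr \<beta>) + (Hh * d a b powr \<beta>) * M"
      using hM Om H ab hH M Mh0 Hh0
      by (intro add_mono mult_mono) auto
    finally show "norm (?\<psi> ?a - ?\<psi> ?b) \<le> (Mh * H + M * Hh) * d a b powr \<beta>" by (simp add: algebra_simps)
  qed
  have "convergent (\<lambda>k. Pk Z f p k ?\<psi> u)"
    by (rule Pk_conv[OF M' H' u]) (use H0 M0 Mh0 Hh0 in auto)
  hence l1: "(\<lambda>k. Pk Z f p k ?\<psi> u) \<longlonglongrightarrow> Pop Z f p ?\<psi> u"
    unfolding Pop_def by (simp add: convergent_LIMSEQ_iff)
  have l2: "(\<lambda>k. 1 / Pk Z f p k h u) \<longlonglongrightarrow> 1 / (lam * h u)"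
    using Pk_h_lim[OF u] by (intro tendsto_divide tendsto_const) auto
  have "(\<lambda>k. (1 / Pk Z f p k h u) *\<^sub>R Pk Z f p k ?\<psi> u) \<longlonglongrightarrow> (1 / (lam * h u)) *\<^sub>R Pop Z f p ?\<psi> u"
    by (rule tendsto_scaleR[OF l2 l1])
  thus ?thesis unfolding Lop_def .
qed


lemma R_diff: fixes \<Phi> :: "(int \<Rightarrow> real) \<Rightarrow> 'b::real_normed_vector"
  assumes M: "\<forall>x\<in>Om. norm (\<Phi> x) \<le> M"
    and H: "\<forall>k a b. a \<in> Om \<longrightarrow> b \<in> Om \<longrightarrow> norm (\<Phi> (pik p k a) - \<Phi> (pik p k b)) \<le> H * d a b powr \<beta>"
    and H0: "0 \<le> H" and M0: "0 \<le> M" and u: "u \<in> Om" and v: "v \<in> Om"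
  shows "norm ((1 / Pk Z f p k h u) *\<^sub>R Pk Z f p k (\<lambda>y. h y *\<^sub>R \<Phi> y) u - (1 / Pk Z f p k h v) *\<^sub>R Pk Z f p k (\<lambda>y. h y *\<^sub>R \<Phi> y) v)
     \<le> (\<eta> powr \<beta> * H + CL * M) * d u v powr \<beta>"
proof -
  let ?A = "branches Z k"
  let ?a = "\<lambda>\<sigma> x. pzx p k \<sigma> x"
  let ?c = "\<lambda>\<sigma> x. exp (f (?a \<sigma> x)) * h (?a \<sigma> x)"
  let ?Y = "\<eta> * d u v"
  let ?Q = "(Hf + Kh) * ?Y powr \<beta>"
  have Ane: "?A \<noteq> {}" unfolding branches_def using Zne by (simp add: PiE_eq_empty_iff)
  have aOm: "\<And>\<sigma> x. \<sigma> \<in> ?A \<Longrightarrow> x \<in> Om \<Longrightarrow> ?a \<sigma> x \<in> Om" using pzx_Om by auto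
  have apik: "\<And>\<sigma> x. pik p k (?a \<sigma> x) = ?a \<sigma> x" using pik_pzx by auto
  have dY: "\<And>\<sigma>. \<sigma> \<in> ?A \<Longrightarrow> d (?a \<sigma> u) (?a \<sigma> v) \<le> ?Y" using d_pzx u v by auto
  have dY': "\<And>\<sigma>. \<sigma> \<in> ?A \<Longrightarrow> d (?a \<sigma> v) (?a \<sigma> u) \<le> ?Y" using dY d_sym aOm u v by metis
  have Y0: "0 \<le> ?Y" using d_nn[OF u v] eta0 by simp
  have "norm ((1 / sum (\<lambda>\<sigma>. ?c \<sigma> u) ?A) *\<^sub>R (\<Sum>\<sigma>\<in>?A. ?c \<sigma> u *\<^sub>R \<Phi> (?a \<sigma> u))
        - (1 / sum (\<lambda>\<sigma>. ?c \<sigma> v) ?A) *\<^sub>R (\<Sum>\<sigma>\<in>?A. ?c \<sigma> v *\<^sub>R \<Phi> (?a \<sigma> v)))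
     \<le> H * ?Y powr \<beta> + 2 * M * (exp (2 * ?Q) - 1)"
  proof (rule wavg[OF fin_branches Ane])
    fix \<sigma> assume s: "\<sigma> \<in> ?A"
    show "0 < ?c \<sigma> u" "0 < ?c \<sigma> v" using hpos aOm[OF s] u v by auto
    show "?c \<sigma> u \<le> exp ?Q * ?c \<sigma> v" by (rule c_ratio[OF aOm[OF s u] aOm[OF s v] apik apik dY[OF s]])
    show "?c \<sigma> v \<le> exp ?Q * ?c \<sigma> u" by (rule c_ratio[OF aOm[OF s v] aOm[OF s u] apik apik dY'[OF s]])
    show "norm (\<Phi> (?a \<sigma> v)) \<le> M" using M aOm[OF s v] by blast
    have "norm (\<Phi> (?a \<sigma> u) - \<Phi> (?a \<sigma> v)) = norm (\<Phi> (pik p k (?a \<sigma> u)) - \<Phi> (pik p k (?a \<sigma> v)))"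
      by (simp only: apik)
    also have "\<dots> \<le> H * d (?a \<sigma> u) (?a \<sigma> v) powr \<beta>" using H aOm[OF s u] aOm[OF s v] by blast
    also have "\<dots> \<le> H * ?Y powr \<beta>"
      using dY[OF s] d_nn[OF aOm[OF s u] aOm[OF s v]] beta0 H0 by (intro mult_left_mono powr_mono2) auto
    finally show "norm (\<Phi> (?a \<sigma> u) - \<Phi> (?a \<sigma> v)) \<le> H * ?Y powr \<beta>" .
  next
    show "0 \<le> ?Q" using Hf0 Kh0 by simp
  qed
  also have "\<dots> \<le> (\<eta> powr \<beta> * H + CL * M) * d u v powr \<beta>"
  proof -
    have Yp: "?Y powr \<beta> = \<eta> powr \<beta> * d u v powr \<beta>" using eta0 d_nn[OF u v] by (simp add: powr_mult)
    have Q0: "0 \<le> ?Q" using Hf0 Kh0 by simp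
    have dB: "d u v powr \<beta> \<le> B powr \<beta>" using d_B[OF u v] d_nn[OF u v] beta0 by (intro powr_mono2) auto
    have QB: "?Q \<le> (Hf + Kh) * \<eta> powr \<beta> * B powr \<beta>"
      unfolding Yp using dB Hf0 Kh0 by (simp add: mult_left_mono mult.assoc)
    have "exp (2 * ?Q) - 1 \<le> (2 * ?Q) * exp (2 * ?Q)" by (rule exp_m1_le) (use Q0 in simp)
    also have "\<dots> \<le> (2 * ?Q) * exp (2 * ((Hf + Kh) * \<eta> powr \<beta> * B powr \<beta>))"
      using QB Q0 by (intro mult_left_mono) auto
    finally have e: "exp (2 * ?Q) - 1 \<le> (2 * ?Q) * exp (2 * ((Hf + Kh) * \<eta> powr \<beta> * B powr \<beta>))" .
    have "2 * M * (exp (2 * ?Q) - 1) \<le> 2 * M * ((2 * ?Q) * exp (2 * ((Hf + Kh) * \<eta> powr \<beta> * B powr \<beta>)))"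
      using e M0 by (intro mult_left_mono) auto
    also have "\<dots> = CL * M * d u v powr \<beta>" unfolding CL_def Yp by (simp add: algebra_simps)
    finally show ?thesis unfolding Yp by (simp add: algebra_simps)
  qed
  finally show ?thesis unfolding R_eq .
qed

lemma R_norm: fixes \<Phi> :: "(int \<Rightarrow> real) \<Rightarrow> 'b::real_normed_vector"
  assumes M: "\<forall>x\<in>Om. norm (\<Phi> x) \<le> M" and u: "u \<in> Om"
  shows "norm ((1 / Pk Z f p k h u) *\<^sub>R Pk Z f p k (\<lambda>y. h y *\<^sub>R \<Phi> y) u) \<le> M"
proof -
  let ?A = "branches Z k"
  let ?a = "\<lambda>\<sigma>. pzx p k \<sigma> u"
  let ?c = "\<lambda>\<sigma>. exp (f (?a \<sigma>)) * h (?a \<sigma>)"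
  have Ane: "?A \<noteq> {}" unfolding branches_def using Zne by (simp add: PiE_eq_empty_iff)
  have cp: "\<And>\<sigma>. \<sigma> \<in> ?A \<Longrightarrow> 0 < ?c \<sigma>" using hpos pzx_Om[OF _ _ u] by auto
  have S: "0 < sum ?c ?A" using cp Ane fin_branches by (intro sum_pos) auto
  have "norm (\<Sum>\<sigma>\<in>?A. ?c \<sigma> *\<^sub>R \<Phi> (?a \<sigma>)) \<le> (\<Sum>\<sigma>\<in>?A. ?c \<sigma> * M)"
  proof (rule order.trans[OF norm_sum sum_mono])
    fix \<sigma> assume s: "\<sigma> \<in> ?A"
    show "norm (?c \<sigma> *\<^sub>R \<Phi> (?a \<sigma>)) \<le> ?c \<sigma> * M"
      using cp[OF s] M pzx_Om[OF s _ u] by (simp add: mult_left_mono)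
  qed
  also have "\<dots> = sum ?c ?A * M" by (simp add: sum_distrib_right)
  finally have "norm (\<Sum>\<sigma>\<in>?A. ?c \<sigma> *\<^sub>R \<Phi> (?a \<sigma>)) \<le> sum ?c ?A * M" .
  thus ?thesis unfolding R_eq using S by (simp add: field_simps)
qed

lemma L_step: fixes \<Phi> :: "(int \<Rightarrow> real) \<Rightarrow> 'b::banach"
  assumes M: "\<forall>x\<in>Om. norm (\<Phi> x) \<le> M"
    and H: "\<forall>k a b. a \<in> Om \<longrightarrow> b \<in> Om \<longrightarrow> norm (\<Phi> (pik p k a) - \<Phi> (pik p k b)) \<le> H * d a b powr \<beta>"
    and H0: "0 \<le> H" and M0: "0 \<le> M"
  shows "\<forall>x\<in>Om. norm (Lop Z f p lam h \<Phi> x) \<le> M"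
    and "\<forall>k a b. a \<in> Om \<longrightarrow> b \<in> Om \<longrightarrow> norm (Lop Z f p lam h \<Phi> (pik p k a) - Lop Z f p lam h \<Phi> (pik p k b))
            \<le> (\<eta> powr \<beta> * H + CL * M) * d a b powr \<beta>"
proof -
  let ?R = "\<lambda>k u. (1 / Pk Z f p k h u) *\<^sub>R Pk Z f p k (\<lambda>y. h y *\<^sub>R \<Phi> y) u"
  show "\<forall>x\<in>Om. norm (Lop Z f p lam h \<Phi> x) \<le> M"
  proof
    fix x assume x: "x \<in> Om"
    have "(\<lambda>k. norm (?R k x)) \<longlonglongrightarrow> norm (Lop Z f p lam h \<Phi> x)"
      by (intro tendsto_norm L_lim[OF M H H0 M0 x])
    thus "norm (Lop Z f p lam h \<Phi> x) \<le> M"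
      by (rule LIMSEQ_le_const2) (use R_norm[OF M x] in auto)
  qed
  show "\<forall>k a b. a \<in> Om \<longrightarrow> b \<in> Om \<longrightarrow> norm (Lop Z f p lam h \<Phi> (pik p k a) - Lop Z f p lam h \<Phi> (pik p k b))
            \<le> (\<eta> powr \<beta> * H + CL * M) * d a b powr \<beta>"
  proof (intro allI impI)
    fix j a b assume ab: "a \<in> Om" "b \<in> Om"
    let ?u = "pik p j a" and ?v = "pik p j b"
    have uv: "?u \<in> Om" "?v \<in> Om" using pik_Om ab by auto
    have "(\<lambda>k. norm (?R k ?u - ?R k ?v)) \<longlonglongrightarrow> norm (Lop Z f p lam h \<Phi> ?u - Lop Z f p lam h \<Phi> ?v)"
      by (intro tendsto_norm tendsto_diff L_lim[OF M H H0 M0] uv)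
    hence "norm (Lop Z f p lam h \<Phi> ?u - Lop Z f p lam h \<Phi> ?v) \<le> (\<eta> powr \<beta> * H + CL * M) * d ?u ?v powr \<beta>"
      by (rule LIMSEQ_le_const2) (use R_diff[OF M H H0 M0 uv] in auto)
    also have "\<dots> \<le> (\<eta> powr \<beta> * H + CL * M) * d a b powr \<beta>"
      using d_pik[OF ab] d_nn[OF uv] beta0 H0 M0 CL0 eta0
      by (intro mult_left_mono powr_mono2) auto
    finally show "norm (Lop Z f p lam h \<Phi> ?u - Lop Z f p lam h \<Phi> ?v) \<le> (\<eta> powr \<beta> * H + CL * M) * d a b powr \<beta>" .
  qed
qed


definition "C5 = CL / (1 - \<eta> powr \<beta>)"

lemma etab: "0 < \<eta> powr \<beta>" "\<eta> powr \<beta> < 1"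
  using eta0 eta1 beta0 powr_less_mono2[of \<beta> \<eta> 1] by auto

lemma C5_0: "0 \<le> C5" unfolding C5_def using CL0 etab by simp

lemma C5_eq: "\<eta> powr \<beta> * C5 + CL = C5"
  unfolding C5_def using etab by (simp add: field_simps)

lemma L_iter: fixes \<Phi> :: "(int \<Rightarrow> real) \<Rightarrow> 'b::banach"
  assumes M: "\<forall>x\<in>Om. norm (\<Phi> x) \<le> M"
    and H: "\<forall>k a b. a \<in> Om \<longrightarrow> b \<in> Om \<longrightarrow> norm (\<Phi> (pik p k a) - \<Phi> (pik p k b)) \<le> H * d a b powr \<beta>"
    and H0: "0 \<le> H" and M0: "0 \<le> M"
  shows "(\<forall>x\<in>Om. norm ((Lop Z f p lam h ^^ n) \<Phi> x) \<le> M) \<and>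
    (\<forall>k a b. a \<in> Om \<longrightarrow> b \<in> Om \<longrightarrow> norm ((Lop Z f p lam h ^^ n) \<Phi> (pik p k a) - (Lop Z f p lam h ^^ n) \<Phi> (pik p k b))
            \<le> (\<eta> powr (\<beta> * real n) * H + C5 * M) * d a b powr \<beta>)"
proof (induction n)
  case 0
  have "\<forall>k a b. a \<in> Om \<longrightarrow> b \<in> Om \<longrightarrow> norm (\<Phi> (pik p k a) - \<Phi> (pik p k b)) \<le> (H + C5 * M) * d a b powr \<beta>"
  proof (intro allI impI)
    fix k a b assume ab: "a \<in> Om" "b \<in> Om"
    have "H * d a b powr \<beta> \<le> (H + C5 * M) * d a b powr \<beta>"
      using C5_0 M0 by (intro mult_right_mono) auto
    thus "norm (\<Phi> (pik p k a) - \<Phi> (pik p k b)) \<le> (H + C5 * M) * d a b powr \<beta>" using H ab by (meson order_trans)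
  qed
  thus ?case using M eta0 by simp
next
  case (Suc n)
  let ?G = "(Lop Z f p lam h ^^ n) \<Phi>"
  have Hn0: "0 \<le> \<eta> powr (\<beta> * real n) * H + C5 * M" using H0 M0 C5_0 by simp
  note st = L_step[OF Suc[THEN conjunct1] Suc[THEN conjunct2] Hn0 M0]
  have eq: "\<eta> powr \<beta> * (\<eta> powr (\<beta> * real n) * H + C5 * M) + CL * M = \<eta> powr (\<beta> * real (Suc n)) * H + C5 * M"
  proof -
    have "\<eta> powr \<beta> * \<eta> powr (\<beta> * real n) = \<eta> powr (\<beta> * real (Suc n))"
      by (simp add: powr_add[symmetric] algebra_simps)
    moreover have "\<eta> powr \<beta> * (C5 * M) + CL * M = C5 * M"
      using C5_eq by (metis distrib_right mult.assoc)
    ultimately show ?thesis by (simp add: algebra_simps)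
  qed
  show ?case using st unfolding eq by simp
qed

end



theorem mainTheorem9:
  fixes dI :: "real \<Rightarrow> real \<Rightarrow> real"
    and \<theta> \<eta> \<beta> lam p :: real
    and \<tau> :: "real \<Rightarrow> real"
    and Z :: "(real \<Rightarrow> real) set"
    and f h :: "(int \<Rightarrow> real) \<Rightarrow> real"
    and \<nu>0 :: "(int \<Rightarrow> real) measure"
  assumes dI_metric: "metric_on_I dI"
    and dI_bounded: "\<exists>B. \<forall>s\<in>Iv. \<forall>t\<in>Iv. dI s t \<le> B"
    and \<theta>: "0 < \<theta>" "\<theta> < 1"
    and tau: "full_branches \<tau> Z"
    and p: "p \<in> Iv" "\<tau> p = p"
    and \<eta>: "0 < \<eta>" "\<eta> < 1"
    and contr: "\<forall>\<zeta>\<in>Z. \<forall>s\<in>Iv. \<forall>t\<in>Iv. dI (\<zeta> s) (\<zeta> t) \<le> \<eta> * dI s t"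
    and \<beta>: "0 < \<beta>" "\<beta> \<le> 1"
    and f: "inC dI \<theta> p \<beta> f"
    and \<nu>0: "prob_space \<nu>0" "space \<nu>0 = Om" "sets \<nu>0 = borelOm dI \<theta>"
    and lam: "lam = integral\<^sup>L \<nu>0 (Pop Z f p (\<lambda>_. 1 :: real))"
    and dual: "\<forall>\<Psi> :: (int \<Rightarrow> real) \<Rightarrow> real. inC dI \<theta> p \<beta> \<Psi> \<longrightarrow>
                 integral\<^sup>L \<nu>0 (Pop Z f p \<Psi>) = lam * integral\<^sup>L \<nu>0 \<Psi>"
    and h: "inC dI \<theta> p \<beta> h" "\<forall>x\<in>Om. 0 < h x"
      "\<forall>x\<in>Om. Pop Z f p h x = lam * h x"
      "integral\<^sup>L \<nu>0 h = 1"
      "\<forall>x\<in>Om. \<forall>y\<in>Om. h x \<le> exp (real_of_ereal (holder dI \<theta> p \<beta> f) * (\<eta> powr \<beta> / (1 - \<eta> powr \<beta>))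
                                         * dOm dI \<theta> x y powr \<beta>) * h y"
  shows "\<exists>C5>0. \<forall>\<Phi> :: (int \<Rightarrow> real) \<Rightarrow> complex. inC dI \<theta> p \<beta> \<Phi> \<longrightarrow>
           (\<forall>n::nat. holder dI \<theta> p \<beta> ((Lop Z f p lam h ^^ n) \<Phi>)
              \<le> holder dI \<theta> p \<beta> \<Phi> * ereal (\<eta> powr (\<beta> * real n)) + ereal C5 * supn \<Phi>)"
proof -
  obtain B0 where B0: "\<forall>s\<in>Iv. \<forall>t\<in>Iv. dI s t \<le> B0" using dI_bounded by blast
  have fb: "finite Z" "Z \<noteq> {}" "\<forall>\<zeta>\<in>Z. \<forall>t\<in>Iv. \<zeta> t \<in> Iv" using tau unfolding full_branches_def by auto
  interpret c: ctx dI \<theta> \<eta> \<beta> p "max B0 0" Z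
    using dI_metric B0 \<theta> p \<eta> contr \<beta> fb by unfold_locales (auto intro: order_trans[OF _ max.cobounded1])
  have fC: "supn f < \<infinity>" "holder dI \<theta> p \<beta> f < \<infinity>" using f unfolding inC_def by auto
  have hC: "supn h < \<infinity>" "holder dI \<theta> p \<beta> h < \<infinity>" using h(1) unfolding inC_def by auto
  define Kh where "Kh = real_of_ereal (holder dI \<theta> p \<beta> f) * (\<eta> powr \<beta> / (1 - \<eta> powr \<beta>))"
  have Kh0: "0 \<le> Kh" unfolding Kh_def using \<eta> \<beta> powr_less_mono2[of \<beta> \<eta> 1] real_of_ereal_pos[OF c.holder_nn[of f]] by simp
  interpret c3: ctx3 dI \<theta> \<eta> \<beta> p "max B0 0" Z f "real_of_ereal (supn f)" "real_of_ereal (holder dI \<theta> p \<beta> f)"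
      h lam "real_of_ereal (supn h)" "real_of_ereal (holder dI \<theta> p \<beta> h)" Kh
  proof unfold_locales
    show "\<forall>x\<in>Om. \<bar>f x\<bar> \<le> real_of_ereal (supn f)" using c.supn_bound[OF fC(1)] by auto
    show "\<forall>k a b. a \<in> Om \<longrightarrow> b \<in> Om \<longrightarrow> \<bar>f (pik p k a) - f (pik p k b)\<bar> \<le> real_of_ereal (holder dI \<theta> p \<beta> f) * dOm dI \<theta> a b powr \<beta>"
      using c.holder_bound[OF fC(2)] by auto
    show "0 \<le> real_of_ereal (holder dI \<theta> p \<beta> f)" by (rule real_of_ereal_pos[OF c.holder_nn])
    show "\<forall>x\<in>Om. 0 < h x" by (rule h(2))
    show "\<forall>x\<in>Om. \<bar>h x\<bar> \<le> real_of_ereal (supn h)" using c.supn_bound[OF hC(1)] by auto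
    show "\<forall>k a b. a \<in> Om \<longrightarrow> b \<in> Om \<longrightarrow> \<bar>h (pik p k a) - h (pik p k b)\<bar> \<le> real_of_ereal (holder dI \<theta> p \<beta> h) * dOm dI \<theta> a b powr \<beta>"
      using c.holder_bound[OF hC(2)] by auto
    show "0 \<le> real_of_ereal (holder dI \<theta> p \<beta> h)" by (rule real_of_ereal_pos[OF c.holder_nn])
    show "0 \<le> real_of_ereal (supn h)" by (rule real_of_ereal_pos[OF c.supn_nn])
    show "0 \<le> Kh" by (rule Kh0)
    show "\<forall>x\<in>Om. \<forall>y\<in>Om. h x \<le> exp (Kh * dOm dI \<theta> x y powr \<beta>) * h y" using h(5) unfolding Kh_def by simp
    show "\<forall>x\<in>Om. Pop Z f p h x = lam * h x" by (rule h(3))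
  qed
  show ?thesis
  proof (intro exI[of _ "c3.C5 + 1"] conjI allI impI)
    show "0 < c3.C5 + 1" using c3.C5_0 by simp
    fix \<Phi> :: "(int \<Rightarrow> real) \<Rightarrow> complex" and n :: nat
    assume \<Phi>: "inC dI \<theta> p \<beta> \<Phi>"
    have \<Phi>C: "supn \<Phi> < \<infinity>" "holder dI \<theta> p \<beta> \<Phi> < \<infinity>" using \<Phi> unfolding inC_def by auto
    define M where "M = real_of_ereal (supn \<Phi>)"
    define H where "H = real_of_ereal (holder dI \<theta> p \<beta> \<Phi>)"
    have M0: "0 \<le> M" unfolding M_def by (rule real_of_ereal_pos[OF c.supn_nn])
    have H0: "0 \<le> H" unfolding H_def by (rule real_of_ereal_pos[OF c.holder_nn])
    have sM: "supn \<Phi> = ereal M" unfolding M_def using \<Phi>C(1) c.supn_nn[of \<Phi>] by (cases "supn \<Phi>") auto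
    have sH: "holder dI \<theta> p \<beta> \<Phi> = ereal H" unfolding H_def using \<Phi>C(2) c.holder_nn[of \<Phi>]
      by (cases "holder dI \<theta> p \<beta> \<Phi>") auto
    have Mb: "\<forall>x\<in>Om. norm (\<Phi> x) \<le> M" unfolding M_def using c.supn_bound[OF \<Phi>C(1)] by auto
    have Hb: "\<forall>k a b. a \<in> Om \<longrightarrow> b \<in> Om \<longrightarrow> norm (\<Phi> (pik p k a) - \<Phi> (pik p k b)) \<le> H * dOm dI \<theta> a b powr \<beta>"
      unfolding H_def using c.holder_bound[OF \<Phi>C(2)] by auto
    note it = c3.L_iter[OF Mb Hb H0 M0, of n, THEN conjunct2]
    have "holder dI \<theta> p \<beta> ((Lop Z f p lam h ^^ n) \<Phi>) \<le> ereal (\<eta> powr (\<beta> * real n) * H + c3.C5 * M)"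
      by (rule c.holder_le) (use it in auto)
    also have "\<dots> \<le> ereal (H * \<eta> powr (\<beta> * real n) + (c3.C5 + 1) * M)"
      using M0 by (simp add: algebra_simps)
    also have "\<dots> = holder dI \<theta> p \<beta> \<Phi> * ereal (\<eta> powr (\<beta> * real n)) + ereal (c3.C5 + 1) * supn \<Phi>"
      unfolding sH sM by simp
    finally show "holder dI \<theta> p \<beta> ((Lop Z f p lam h ^^ n) \<Phi>) \<le> holder dI \<theta> p \<beta> \<Phi> * ereal (\<eta> powr (\<beta> * real n)) + ereal (c3.C5 + 1) * supn \<Phi>" .
  qed
qed



end
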